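(* Let $b>0$ and $c\ge1$ be constants, and for each $M\in\mathbb{N}$ let $a_M\in[1/2,1)$ with $a_M/(1-a_M)\le c^M$. Let $A_1=\{z\in\mathbb{R}^M:\sum_iz_i<0\}$, $A_2=\{z:\sum_iz_i\ge0\}$ and $$\tilde\pi(z)\propto a_MN_M(z;-b\mathbf{1}_M,I_M)\mathbf{1}_{A_1}(z)+(1-a_M)N_M(z;b\mathbf{1}_M,I_M)\mathbf{1}_{A_2}(z).$$ Let $\beta_0<\beta_1<\dots<\beta_N$ be the distinct elements of $\{M^{-(M-k)/M}:k=0,\dots,M\}\cup\{k/M:k=1,\dots,M\}$ in increasing order, and $\pi_k\propto\tilde\pi^{\beta_k}$. Then for $\mathcal{A}=\{A_1,\dots,A_2\}$: $\pi_k[A_1]$ is nondecreasing in $k$, $\gamma(\mathcal{A})\ge1/2$, and $\delta(\mathcal{A})\ge\frac{1}{2c\sqrt M}$.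
   Context: $N_M(z;\nu,\Sigma)$ is the $M$-variate normal density; $\mathbf{1}_M$ the all-ones vector; $I_M$ the identity; Lebesgue measure on $\mathbb{R}^M$; $\pi_k[A]=\int_A\pi_k$. Overlap $\delta(\mathcal{A})=\min_{|k-l|=1,\,j}\frac{1}{\pi_k[A_j]}\int_{A_j}\min\{\pi_k,\pi_l\}$ with $k,l\in\{0,\dots,N\}$; $\gamma(\mathcal{A})=\min_j\prod_{k=1}^N\min\{1,\pi_{k-1}[A_j]/\pi_k[A_j]\}$. *)

theory Defs
  imports "HOL-Analysis.Analysis"
begin

definition normal_id_dens :: "real^'n \<Rightarrow> real^'n \<Rightarrow> real" where
  "normal_id_dens mu z = (2 * pi) powr (- real CARD('n) / 2) * exp (- (norm (z - mu))\<^sup>2 / 2)"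

definition A1 :: "(real^'n) set" where
  "A1 = {z. (\<Sum>i\<in>UNIV. z $ i) < 0}"

definition A2 :: "(real^'n) set" where
  "A2 = {z. (\<Sum>i\<in>UNIV. z $ i) \<ge> 0}"

text \<open>Unnormalised target density (normalising constant of pi-tilde cancels in pi_k).\<close>
definition pi_tilde :: "real \<Rightarrow> real \<Rightarrow> real^'n \<Rightarrow> real" where
  "pi_tilde a b z = a * normal_id_dens (\<chi> i. - b) z * indicator A1 z
                  + (1 - a) * normal_id_dens (\<chi> i. b) z * indicator A2 z"

definition pi_temp :: "real \<Rightarrow> real \<Rightarrow> real \<Rightarrow> real^'n \<Rightarrow> real" where
  "pi_temp a b beta z = pi_tilde a b z powr beta / (\<integral>x. pi_tilde a b (x :: real^'n) powr beta \<partial>lborel)"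

definition pi_meas :: "real \<Rightarrow> real \<Rightarrow> real \<Rightarrow> (real^'n) set \<Rightarrow> real" where
  "pi_meas a b beta A = (LINT z:A|lborel. pi_temp a b beta z)"

definition betas :: "nat \<Rightarrow> real list" where
  "betas M = sorted_list_of_set
     ((\<lambda>k. real M powr (- (real M - real k) / real M)) ` {0..M}
      \<union> (\<lambda>k. real k / real M) ` {1..M})"

end

theory Submission
  imports Defs "HOL-Probability.Probability"
begin


definition gauss :: "real \<Rightarrow> real^'n \<Rightarrow> real^'n \<Rightarrow> real" where
  "gauss \<beta> \<mu> z = (\<beta> / (2*pi)) powr (real CARD('n) / 2) * exp (- \<beta> * (norm (z - \<mu>))\<^sup>2 / 2)"

lemma gauss_pos: "\<beta> > 0 \<Longrightarrow> gauss \<beta> \<mu> z > 0"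
  by (simp add: gauss_def)

lemma gauss_meas[measurable]: "gauss \<beta> \<mu> \<in> borel_measurable borel"
  unfolding gauss_def by measurable

lemma gauss_prod:
  fixes \<mu> z :: "real^'n"
  assumes "\<beta> > 0"
  shows "gauss \<beta> \<mu> z = (\<Prod>b\<in>Basis. normal_density (\<mu> \<bullet> b) (1/sqrt \<beta>) (z \<bullet> b))"
proof -
  have cb: "card (Basis :: (real^'n) set) = CARD('n)"
    using DIM_cart[where 'a=real and 'b='n] by simp
  have nd: "normal_density (\<mu> \<bullet> b) (1/sqrt \<beta>) (z \<bullet> b) = sqrt (\<beta>/(2*pi)) * exp (- \<beta> * ((z-\<mu>) \<bullet> b)\<^sup>2 / 2)" for b
    using assms by (simp add: normal_density_def power_divide real_sqrt_divide inner_diff_left field_simps)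
  have "(\<Prod>b\<in>Basis. normal_density (\<mu> \<bullet> b) (1/sqrt \<beta>) (z \<bullet> b))
      = (\<Prod>b\<in>(Basis::(real^'n) set). sqrt (\<beta>/(2*pi))) * (\<Prod>b\<in>(Basis::(real^'n) set). exp (- \<beta> * ((z-\<mu>) \<bullet> b)\<^sup>2 / 2))"
    by (simp add: nd prod.distrib)
  also have "(\<Prod>b\<in>(Basis::(real^'n) set). sqrt (\<beta>/(2*pi))) = (\<beta> / (2*pi)) powr (real CARD('n) / 2)"
    using assms by (simp add: cb sqrt_def root_powr_inverse powr_realpow[symmetric] powr_powr)
  also have "(\<Prod>b\<in>(Basis::(real^'n) set). exp (- \<beta> * ((z-\<mu>) \<bullet> b)\<^sup>2 / 2)) = exp (\<Sum>b\<in>(Basis::(real^'n) set). - \<beta> * ((z-\<mu>) \<bullet> b)\<^sup>2 / 2)"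
    by (simp add: exp_sum)
  also have "(\<Sum>b\<in>(Basis::(real^'n) set). - \<beta> * ((z-\<mu>) \<bullet> b)\<^sup>2 / 2) = - \<beta> * (norm (z - \<mu>))\<^sup>2 / 2"
  proof -
    have "(norm (z - \<mu>))\<^sup>2 = (\<Sum>b\<in>(Basis::(real^'n) set). ((z-\<mu>) \<bullet> b)\<^sup>2)"
      unfolding power2_norm_eq_inner by (subst euclidean_inner) (simp add: power2_eq_square)
    then show ?thesis by (simp add: sum_distrib_left sum_divide_distrib sum_negf)
  qed
  finally show ?thesis by (simp add: gauss_def)
qed

lemma gauss_nn_integral:
  fixes \<mu> :: "real^'n"
  assumes "\<beta> > 0"
  shows "(\<integral>\<^sup>+z. ennreal (gauss \<beta> \<mu> z) \<partial>lborel) = 1"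
proof -
  have "(\<integral>\<^sup>+z. ennreal (gauss \<beta> \<mu> z) \<partial>lborel)
      = (\<integral>\<^sup>+z. (\<Prod>b\<in>(Basis::(real^'n) set). ennreal (normal_density (\<mu> \<bullet> b) (1/sqrt \<beta>) (z \<bullet> b))) \<partial>lborel)"
    using assms by (simp add: gauss_prod prod_ennreal)
  also have "\<dots> = (\<Prod>b\<in>(Basis::(real^'n) set). (\<integral>\<^sup>+x. ennreal (normal_density (\<mu> \<bullet> b) (1/sqrt \<beta>) x) \<partial>lborel))"
    by (rule nn_integral_lborel_prod) auto
  also have "\<dots> = 1"
  proof -
    have "(\<integral>\<^sup>+x. ennreal (normal_density m (1/sqrt \<beta>) x) \<partial>lborel) = 1" for m
      using assms by (subst nn_integral_eq_integral) (auto simp: integrable_normal_density integral_normal_density)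
    then show ?thesis by simp
  qed
  finally show ?thesis .
qed

lemma gauss_integrable:
  fixes \<mu> :: "real^'n"
  assumes "\<beta> > 0"
  shows "integrable lborel (gauss \<beta> \<mu>)"
proof (rule integrableI_nonneg)
  show "AE x in lborel. 0 \<le> gauss \<beta> \<mu> x" using gauss_pos[OF assms] by (auto intro: less_imp_le)
  show "(\<integral>\<^sup>+x. ennreal (gauss \<beta> \<mu> x) \<partial>lborel) < \<infinity>" using gauss_nn_integral[OF assms, of \<mu>] by simp
qed simp

lemma gauss_integral:
  fixes \<mu> :: "real^'n"
  assumes "\<beta> > 0"
  shows "(\<integral>z. gauss \<beta> \<mu> z \<partial>lborel) = 1"
  using gauss_nn_integral[OF assms, of \<mu>] gauss_pos[OF assms]
  by (subst integral_eq_nn_integral) (auto intro: less_imp_le)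

lemma nn_reflect:
  fixes t :: "'a::euclidean_space"
  assumes [measurable]: "f \<in> borel_measurable borel"
  shows "(\<integral>\<^sup>+x. f x \<partial>lborel) = (\<integral>\<^sup>+x. f (t - x) \<partial>lborel)"
proof -
  have "(\<integral>\<^sup>+x. f x \<partial>lborel) = (\<integral>\<^sup>+x. f x \<partial>density (distr lborel borel (\<lambda>x. t + (-1) *\<^sub>R x)) (\<lambda>_. \<bar>-1::real\<bar>^DIM('a)))"
    by (subst lborel_affine[of "-1" t, symmetric]) auto
  also have "\<dots> = (\<integral>\<^sup>+x. f (t - x) \<partial>lborel)"
    by (simp add: nn_integral_density nn_integral_distr)
  finally show ?thesis .
qed

lemma A1_meas[measurable]: "(A1 :: (real^'n) set) \<in> sets lborel"
  unfolding A1_def by measurable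

lemma A2_meas[measurable]: "(A2 :: (real^'n) set) \<in> sets lborel"
  unfolding A2_def by measurable

lemma sum_vec_diff: "(\<Sum>i\<in>UNIV. (x - y :: real^'n) $ i) = (\<Sum>i\<in>UNIV. x $ i) - (\<Sum>i\<in>UNIV. y $ i)"
  by (simp add: sum_subtractf)

lemma sum_vec_scale: "(\<Sum>i\<in>UNIV. (c *\<^sub>R x :: real^'n) $ i) = c * (\<Sum>i\<in>UNIV. x $ i)"
  by (simp add: sum_distrib_left)

lemma sum_vec_neg: "(\<Sum>i\<in>UNIV. (- x :: real^'n) $ i) = - (\<Sum>i\<in>UNIV. x $ i)"
  by (simp add: sum_negf)

lemma gauss_sym: "gauss \<beta> \<mu> (2 *\<^sub>R \<mu> - x) = gauss \<beta> \<mu> x"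
proof -
  have "2 *\<^sub>R \<mu> - x - \<mu> = - (x - \<mu>)" by (simp add: scaleR_2 algebra_simps)
  then have "norm (2 *\<^sub>R \<mu> - x - \<mu>) = norm (x - \<mu>)"
    by (metis norm_minus_cancel)
  then show ?thesis by (simp add: gauss_def)
qed

lemma gauss_neg: "gauss \<beta> (-\<mu>) (- x) = gauss \<beta> \<mu> x"
proof -
  have "norm (- x - - \<mu>) = norm (x - \<mu>)"
    by (metis minus_diff_eq minus_diff_minus norm_minus_cancel)
  then show ?thesis by (simp add: gauss_def)
qed

lemma gauss_A1_bounds:
  fixes \<mu> :: "real^'n"
  assumes b: "\<beta> > 0" and m: "(\<Sum>i\<in>UNIV. \<mu> $ i) < 0"
  shows "1/2 \<le> (LINT z:A1|lborel. gauss \<beta> \<mu> z) \<and> (LINT z:A1|lborel. gauss \<beta> \<mu> z) \<le> 1"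
proof -
  let ?g = "gauss \<beta> \<mu>"
  have int: "integrable lborel ?g" by (rule gauss_integrable[OF b])
  have gp: "\<And>x. 0 \<le> ?g x" using gauss_pos[OF b] by (auto intro: less_imp_le)
  have iA: "integrable lborel (\<lambda>x. indicator A1 x * ?g x)"
    using integrable_mult_indicator[OF A1_meas int] by simp
  have iC: "integrable lborel (\<lambda>x. indicator (- A1) x * ?g x)"
  proof -
    have "- A1 = (A2 :: (real^'n) set)" unfolding A1_def A2_def by auto
    then show ?thesis using integrable_mult_indicator[OF A2_meas int] by simp
  qed
  have split: "?g x = indicator A1 x * ?g x + indicator (- A1) x * ?g x" for x
    by (simp split: split_indicator)
  have tot: "(\<integral>x. indicator A1 x * ?g x \<partial>lborel) + (\<integral>x. indicator (- A1) x * ?g x \<partial>lborel) = 1"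
    using gauss_integral[OF b, of \<mu>] Bochner_Integration.integral_add[OF iA iC] split by simp
  have "ennreal (\<integral>x. indicator (- A1) x * ?g x \<partial>lborel) = (\<integral>\<^sup>+x. ennreal (indicator (- A1) x * ?g x) \<partial>lborel)"
    using iC gp by (subst nn_integral_eq_integral) (auto split: split_indicator)
  also have "\<dots> = (\<integral>\<^sup>+x. ennreal (indicator (- A1) (2 *\<^sub>R \<mu> - x) * ?g (2 *\<^sub>R \<mu> - x)) \<partial>lborel)"
    by (rule nn_reflect) measurable
  also have "\<dots> \<le> (\<integral>\<^sup>+x. ennreal (indicator A1 x * ?g x) \<partial>lborel)"
  proof (rule nn_integral_mono)
    fix x :: "real^'n"
    have "indicator (- A1) (2 *\<^sub>R \<mu> - x) \<le> (indicator A1 x :: real)"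
      using m by (auto simp: A1_def sum_subtractf sum_distrib_left[symmetric] split: split_indicator)
    then show "ennreal (indicator (- A1) (2 *\<^sub>R \<mu> - x) * ?g (2 *\<^sub>R \<mu> - x)) \<le> ennreal (indicator A1 x * ?g x)"
      using gp[of x] by (auto simp: gauss_sym intro!: ennreal_leI mult_right_mono)
  qed
  also have "\<dots> = ennreal (\<integral>x. indicator A1 x * ?g x \<partial>lborel)"
    using iA gp by (subst nn_integral_eq_integral) (auto split: split_indicator)
  finally have le: "(\<integral>x. indicator (- A1) x * ?g x \<partial>lborel) \<le> (\<integral>x. indicator A1 x * ?g x \<partial>lborel)"
    using integral_nonneg_AE[of "\<lambda>x. indicator A1 x * ?g x" lborel] gp
    by (subst (asm) ennreal_le_iff) auto
  have nn: "0 \<le> (\<integral>x. indicator (- A1) x * ?g x \<partial>lborel)"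
    using gp by (intro integral_nonneg_AE) auto
  show ?thesis using tot le nn by (simp add: set_lebesgue_integral_def)
qed

lemma hyperplane_null: "{x :: real^'n. (\<Sum>i\<in>UNIV. x $ i) = 0} \<in> null_sets lborel"
proof -
  have eq: "{x :: real^'n. (\<Sum>i\<in>UNIV. x $ i) = 0} = {x. (\<chi> i. 1) \<bullet> x = 0}"
    by (simp add: inner_vec_def)
  have "(\<chi> i. (1::real)) \<noteq> 0" by (metis vec_eq_iff zero_index zero_neq_one vec_lambda_beta)
  then have "negligible {x :: real^'n. (\<chi> i. 1) \<bullet> x = 0}"
    by (intro negligible_hyperplane) auto
  moreover have "{x :: real^'n. (\<chi> i. 1) \<bullet> x = 0} \<in> sets lborel" by measurable
  ultimately show ?thesis
    unfolding eq by (auto simp: null_sets_completion_iff negligible_iff_null_sets)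
qed

lemma gauss_A2_eq:
  fixes \<mu> :: "real^'n"
  assumes b: "\<beta> > 0"
  shows "(LINT z:A2|lborel. gauss \<beta> (-\<mu>) z) = (LINT z:A1|lborel. gauss \<beta> \<mu> z)"
proof -
  have gp: "\<And>x m. 0 \<le> gauss \<beta> m x" using gauss_pos[OF b] by (auto intro: less_imp_le)
  have i1: "integrable lborel (\<lambda>x. indicator A1 x * gauss \<beta> \<mu> x)"
    using integrable_mult_indicator[OF A1_meas gauss_integrable[OF b]] by simp
  have i2: "integrable lborel (\<lambda>x. indicator A2 x * gauss \<beta> (-\<mu>) x)"
    using integrable_mult_indicator[OF A2_meas gauss_integrable[OF b]] by simp
  have "ennreal (\<integral>x. indicator A2 x * gauss \<beta> (-\<mu>) x \<partial>lborel) = (\<integral>\<^sup>+x. ennreal (indicator A2 x * gauss \<beta> (-\<mu>) x) \<partial>lborel)"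
    using i2 gp by (subst nn_integral_eq_integral) (auto split: split_indicator)
  also have "\<dots> = (\<integral>\<^sup>+x. ennreal (indicator A2 (0 - x) * gauss \<beta> (-\<mu>) (0 - x)) \<partial>lborel)"
    by (rule nn_reflect) measurable
  also have "\<dots> = (\<integral>\<^sup>+x. ennreal (indicator A1 x * gauss \<beta> \<mu> x) \<partial>lborel)"
  proof (rule nn_integral_cong_AE)
    have "AE x in lborel. x \<notin> {x :: real^'n. (\<Sum>i\<in>UNIV. x $ i) = 0}"
      using hyperplane_null by (rule AE_not_in)
    then show "AE x in lborel. ennreal (indicator A2 (0 - x) * gauss \<beta> (-\<mu>) (0 - x)) = ennreal (indicator A1 x * gauss \<beta> \<mu> x)"
      by eventually_elim (auto simp: A1_def A2_def sum_negf gauss_neg split: split_indicator)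
  qed
  also have "\<dots> = ennreal (\<integral>x. indicator A1 x * gauss \<beta> \<mu> x \<partial>lborel)"
    using i1 gp by (subst nn_integral_eq_integral) (auto split: split_indicator)
  finally have e: "ennreal (\<integral>x. indicator A2 x * gauss \<beta> (-\<mu>) x \<partial>lborel) = ennreal (\<integral>x. indicator A1 x * gauss \<beta> \<mu> x \<partial>lborel)" .
  have n1: "0 \<le> (\<integral>x. indicator A2 x * gauss \<beta> (-\<mu>) x \<partial>lborel)"
    by (intro integral_nonneg_AE) (simp add: gp)
  have n2: "0 \<le> (\<integral>x. indicator A1 x * gauss \<beta> \<mu> x \<partial>lborel)"
    by (intro integral_nonneg_AE) (simp add: gp)
  show ?thesis using e n1 n2 by (simp add: set_lebesgue_integral_def)
qed

definition Qc :: "'n::finite itself \<Rightarrow> real \<Rightarrow> real" where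
  "Qc _ \<beta> = (2*pi) powr (- real CARD('n) * \<beta> / 2) / (\<beta> / (2*pi)) powr (real CARD('n) / 2)"

lemma Qc_pos: "\<beta> > 0 \<Longrightarrow> Qc TYPE('n::finite) \<beta> > 0"
  by (simp add: Qc_def)

lemma nid_powr:
  fixes \<mu> z :: "real^'n"
  assumes "\<beta> > 0" "u > 0"
  shows "(u * normal_id_dens \<mu> z) powr \<beta> = u powr \<beta> * Qc TYPE('n::finite) \<beta> * gauss \<beta> \<mu> z"
proof -
  have "(u * normal_id_dens \<mu> z) powr \<beta> = u powr \<beta> * ((2 * pi) powr (- real CARD('n) / 2)) powr \<beta> * exp (- (norm (z - \<mu>))\<^sup>2 / 2) powr \<beta>"
    by (simp add: normal_id_dens_def powr_mult)
  also have "\<dots> = u powr \<beta> * (2 * pi) powr (- real CARD('n) * \<beta> / 2) * exp (- \<beta> * (norm (z - \<mu>))\<^sup>2 / 2)"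
    by (simp add: powr_powr exp_powr_real mult.commute)
  also have "\<dots> = u powr \<beta> * Qc TYPE('n::finite) \<beta> * gauss \<beta> \<mu> z"
    using assms by (simp add: Qc_def gauss_def)
  finally show ?thesis .
qed

lemma A1A2_disj: "z \<in> A1 \<Longrightarrow> z \<notin> A2" "z \<notin> A1 \<Longrightarrow> z \<in> A2"
  by (auto simp: A1_def A2_def)

lemma pt_powr:
  fixes z :: "real^'n"
  assumes "\<beta> > 0" "0 < a" "a < 1"
  shows "pi_tilde a b z powr \<beta> = Qc TYPE('n::finite) \<beta> * (indicator A1 z * (a powr \<beta> * gauss \<beta> (\<chi> i. - b) z)
            + indicator A2 z * ((1 - a) powr \<beta> * gauss \<beta> (\<chi> i. b) z))"
proof (cases "z \<in> A1")
  case True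
  then show ?thesis using A1A2_disj(1)[OF True] nid_powr[where \<mu>="\<chi> i. - b" and z=z and u=a] assms
    by (simp add: pi_tilde_def)
next
  case False
  then show ?thesis using A1A2_disj(2)[OF False] nid_powr[where \<mu>="\<chi> i. b" and z=z and u="1-a"] assms
    by (simp add: pi_tilde_def)
qed

lemma int_pull: "(\<integral>z. indicator A z * (c * f z) \<partial>M) = (c::real) * (\<integral>z. indicator A z * f z \<partial>M)"
  by (subst integral_mult_right_zero[symmetric]) (rule Bochner_Integration.integral_cong; simp)

definition II :: "'n::finite itself \<Rightarrow> real \<Rightarrow> real \<Rightarrow> real" where
  "II _ b \<beta> = (LINT z:(A1::(real^'n) set)|lborel. gauss \<beta> (\<chi> i. - b) z)"

lemma II_bounds:
  assumes "\<beta> > 0" "b > 0"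
  shows "1/2 \<le> II TYPE('n::finite) b \<beta> \<and> II TYPE('n::finite) b \<beta> \<le> 1"
proof -
  have "(\<Sum>i\<in>UNIV. (\<chi> i. - b :: real^'n) $ i) < 0" using assms by simp
  then show ?thesis unfolding II_def by (rule gauss_A1_bounds[OF assms(1)])
qed

lemma II_A2:
  assumes "\<beta> > 0"
  shows "(LINT z:(A2::(real^'n) set)|lborel. gauss \<beta> (\<chi> i. b) z) = II TYPE('n::finite) b \<beta>"
proof -
  have "(\<chi> i. b :: real^'n) = - (\<chi> i. - b)" by (simp add: vec_eq_iff)
  then show ?thesis unfolding II_def using gauss_A2_eq[OF assms, of "\<chi> i. - b"] by simp
qed

lemma Z_eq:
  assumes "\<beta> > 0" "0 < a" "a < 1" "b > 0"
  shows "(\<integral>x. pi_tilde a b (x :: real^'n) powr \<beta> \<partial>lborel) = Qc TYPE('n::finite) \<beta> * (a powr \<beta> + (1-a) powr \<beta>) * II TYPE('n::finite) b \<beta>"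
proof -
  have i1: "integrable lborel (\<lambda>z::real^'n. indicator A1 z * (a powr \<beta> * gauss \<beta> (\<chi> i. - b) z))"
    using integrable_mult_indicator[OF A1_meas integrable_mult_right[OF gauss_integrable[OF assms(1)]]] by simp
  have i2: "integrable lborel (\<lambda>z::real^'n. indicator A2 z * ((1-a) powr \<beta> * gauss \<beta> (\<chi> i. b) z))"
    using integrable_mult_indicator[OF A2_meas integrable_mult_right[OF gauss_integrable[OF assms(1)]]] by simp
  have "(\<integral>x. pi_tilde a b (x :: real^'n) powr \<beta> \<partial>lborel)
      = Qc TYPE('n::finite) \<beta> * ((\<integral>z. indicator A1 z * (a powr \<beta> * gauss \<beta> (\<chi> i. - b) (z::real^'n)) \<partial>lborel)
          + (\<integral>z. indicator A2 z * ((1-a) powr \<beta> * gauss \<beta> (\<chi> i. b) (z::real^'n)) \<partial>lborel))"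
  proof -
    have "(\<integral>x. pi_tilde a b (x :: real^'n) powr \<beta> \<partial>lborel) = (\<integral>z. Qc TYPE('n::finite) \<beta> * (indicator A1 z * (a powr \<beta> * gauss \<beta> (\<chi> i. - b) z)
            + indicator A2 z * ((1 - a) powr \<beta> * gauss \<beta> (\<chi> i. b) (z::real^'n))) \<partial>lborel)"
      using assms by (simp add: pt_powr)
    also have "\<dots> = Qc TYPE('n::finite) \<beta> * (\<integral>z. (indicator A1 z * (a powr \<beta> * gauss \<beta> (\<chi> i. - b) z)
            + indicator A2 z * ((1 - a) powr \<beta> * gauss \<beta> (\<chi> i. b) (z::real^'n))) \<partial>lborel)"
      by (rule integral_mult_right_zero)
    also have "(\<integral>z. (indicator A1 z * (a powr \<beta> * gauss \<beta> (\<chi> i. - b) z)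
            + indicator A2 z * ((1 - a) powr \<beta> * gauss \<beta> (\<chi> i. b) (z::real^'n))) \<partial>lborel)
        = (\<integral>z. indicator A1 z * (a powr \<beta> * gauss \<beta> (\<chi> i. - b) (z::real^'n)) \<partial>lborel)
          + (\<integral>z. indicator A2 z * ((1-a) powr \<beta> * gauss \<beta> (\<chi> i. b) (z::real^'n)) \<partial>lborel)"
      using Bochner_Integration.integral_add[OF i1 i2] by simp
    finally show ?thesis .
  qed
  also have "(\<integral>z. indicator A1 z * (a powr \<beta> * gauss \<beta> (\<chi> i. - b) (z::real^'n)) \<partial>lborel) = a powr \<beta> * II TYPE('n::finite) b \<beta>"
    unfolding II_def set_lebesgue_integral_def by (simp add: int_pull)
  also have "(\<integral>z. indicator A2 z * ((1-a) powr \<beta> * gauss \<beta> (\<chi> i. b) (z::real^'n)) \<partial>lborel) = (1-a) powr \<beta> * II TYPE('n::finite) b \<beta>"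
    using II_A2[OF assms(1), where b=b and 'n='n, symmetric] unfolding set_lebesgue_integral_def by (simp add: int_pull)
  finally show ?thesis by (simp add: algebra_simps)
qed

lemma pt_A1:
  fixes z :: "real^'n"
  assumes "\<beta> > 0" "0 < a" "a < 1" "b > 0" "z \<in> A1"
  shows "pi_temp a b \<beta> z = (a powr \<beta> / (a powr \<beta> + (1-a) powr \<beta>)) * gauss \<beta> (\<chi> i. - b) z / II TYPE('n) b \<beta>"
  unfolding pi_temp_def Z_eq[OF assms(1-4)]
  using assms A1A2_disj(1)[OF assms(5)] Qc_pos[OF assms(1), where 'n='n]
  by (simp add: pt_powr)

lemma pt_A2:
  fixes z :: "real^'n"
  assumes "\<beta> > 0" "0 < a" "a < 1" "b > 0" "z \<in> A2"
  shows "pi_temp a b \<beta> z = ((1-a) powr \<beta> / (a powr \<beta> + (1-a) powr \<beta>)) * gauss \<beta> (\<chi> i. b) z / II TYPE('n) b \<beta>"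
proof -
  have "z \<notin> A1" using assms(5) by (auto simp: A1_def A2_def)
  then show ?thesis
    unfolding pi_temp_def Z_eq[OF assms(1-4)]
    using assms Qc_pos[OF assms(1), where 'n='n]
    by (simp add: pt_powr)
qed

lemma pm_A1:
  assumes "\<beta> > 0" "0 < a" "a < 1" "b > 0"
  shows "pi_meas a b \<beta> (A1 :: (real^'n) set) = a powr \<beta> / (a powr \<beta> + (1-a) powr \<beta>)"
proof -
  have "pi_meas a b \<beta> (A1 :: (real^'n) set) = (LINT z:(A1 :: (real^'n) set)|lborel. (a powr \<beta> / (a powr \<beta> + (1-a) powr \<beta>) / II TYPE('n) b \<beta>) * gauss \<beta> (\<chi> i. - b) z)"
    unfolding pi_meas_def by (rule set_lebesgue_integral_cong[OF A1_meas]) (use assms in \<open>simp add: pt_A1\<close>)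
  also have "\<dots> = a powr \<beta> / (a powr \<beta> + (1-a) powr \<beta>)"
    using II_bounds[OF assms(1) assms(4), where 'n='n] assms unfolding II_def by simp
  finally show ?thesis .
qed

lemma pm_A2:
  assumes "\<beta> > 0" "0 < a" "a < 1" "b > 0"
  shows "pi_meas a b \<beta> (A2 :: (real^'n) set) = (1-a) powr \<beta> / (a powr \<beta> + (1-a) powr \<beta>)"
proof -
  have "pi_meas a b \<beta> (A2 :: (real^'n) set) = (LINT z:(A2 :: (real^'n) set)|lborel. ((1-a) powr \<beta> / (a powr \<beta> + (1-a) powr \<beta>) / II TYPE('n) b \<beta>) * gauss \<beta> (\<chi> i. b) z)"
    unfolding pi_meas_def by (rule set_lebesgue_integral_cong[OF A2_meas]) (use assms in \<open>simp add: pt_A2\<close>)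
  also have "\<dots> = (1-a) powr \<beta> / (a powr \<beta> + (1-a) powr \<beta>)"
    using II_bounds[OF assms(1) assms(4), where 'n='n] II_A2[OF assms(1), where b=b and 'n='n] by simp
  finally show ?thesis .
qed

lemma gauss_cmp:
  fixes \<mu> z :: "real^'n"
  assumes "0 < \<beta>1" "\<beta>1 \<le> \<beta>2"
  shows "gauss \<beta>2 \<mu> z \<le> (\<beta>2/\<beta>1) powr (real CARD('n)/2) * gauss \<beta>1 \<mu> z"
proof -
  have "(\<beta>2/(2*pi)) powr (real CARD('n)/2) = (\<beta>2/\<beta>1) powr (real CARD('n)/2) * (\<beta>1/(2*pi)) powr (real CARD('n)/2)"
    using assms by (simp add: powr_mult[symmetric])
  moreover have "exp (- \<beta>2 * (norm (z - \<mu>))\<^sup>2 / 2) \<le> exp (- \<beta>1 * (norm (z - \<mu>))\<^sup>2 / 2)"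
    using assms by (simp add: mult_right_mono)
  ultimately show ?thesis
    unfolding gauss_def by (simp add: mult.assoc mult_left_mono)
qed

lemma si_cong:
  assumes "\<And>x. x \<in> A \<Longrightarrow> f x = g x" "set_integrable M A g"
  shows "set_integrable M A f"
  using assms(2) unfolding set_integrable_def
  by (rule Bochner_Integration.integrable_cong[THEN iffD1, rotated 2]) (auto simp: assms(1) split: split_indicator)

lemma ov_core:
  fixes p q :: "'a \<Rightarrow> real"
  assumes "set_integrable M A p" "set_integrable M A q"
    "\<And>z. z \<in> A \<Longrightarrow> 0 \<le> p z" "\<And>z. z \<in> A \<Longrightarrow> \<theta> * p z \<le> q z" "0 \<le> \<theta>"
  shows "min 1 \<theta> * (LINT z:A|M. p z) \<le> (LINT z:A|M. min (p z) (q z))"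
proof -
  have im: "set_integrable M A (\<lambda>z. min (p z) (q z))"
  proof -
    have "integrable M (\<lambda>x. min (indicator A x *\<^sub>R p x) (indicator A x *\<^sub>R q x))"
      using assms(1,2) unfolding set_integrable_def by (rule integrable_min)
    then show ?thesis unfolding set_integrable_def
      by (rule Bochner_Integration.integrable_cong[THEN iffD1, rotated 2]) (auto split: split_indicator)
  qed
  have "min 1 \<theta> * (LINT z:A|M. p z) = (LINT z:A|M. min 1 \<theta> * p z)" by simp
  also have "\<dots> \<le> (LINT z:A|M. min (p z) (q z))"
  proof (rule set_integral_mono)
    show "set_integrable M A (\<lambda>z. min 1 \<theta> * p z)"
      using assms(1) unfolding set_integrable_def by (simp add: mult.left_commute[of "indicator A _"])
    show "set_integrable M A (\<lambda>z. min (p z) (q z))" by (rule im)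
    fix z assume z: "z \<in> A"
    have "min 1 \<theta> * p z \<le> p z" using assms(3)[OF z] assms(5) by (intro mult_left_le_one_le) auto
    moreover have "min 1 \<theta> * p z \<le> \<theta> * p z" using assms(3)[OF z] by (simp add: mult_right_mono)
    ultimately show "min 1 \<theta> * p z \<le> min (p z) (q z)" using assms(4)[OF z] by simp
  qed
  finally show ?thesis .
qed

lemma final_arith:
  fixes c m x y :: real
  assumes "1 \<le> c" "1 \<le> m" "1/c \<le> x" "1/(2*m) \<le> y"
  shows "1/(2*c*m) \<le> min x y"
proof -
  have "1/(2*c*m) \<le> 1/c" using assms by (simp add: field_simps)
  moreover have "1/(2*c*m) \<le> 1/(2*m)" using assms by (simp add: field_simps)
  ultimately show ?thesis using assms by simp
qed

lemma min_scale: "0 < (p::real) \<Longrightarrow> min 1 \<theta> * p = min p (\<theta> * p)"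
  by (cases "\<theta> \<le> 1") (auto simp: min_def)

lemma half_aux:
  fixes g I :: real assumes "0 \<le> g" "1/2 \<le> I" shows "g/(2*I) \<le> g"
proof -
  have "g*1 \<le> g*(2*I)" using assms by (intro mult_left_mono) auto
  then show ?thesis using assms by (simp add: divide_le_eq)
qed

lemma final_arith2:
  fixes c m x y :: real
  assumes "1 \<le> c" "1 \<le> m" "1/c \<le> x" "0 < R" "R \<le> m"
  shows "1/(2*c*m) \<le> min 1 (x / (2*R))"
proof -
  have "1 \<le> c*m" using mult_mono[of 1 c 1 m] assms by simp
  then have "1/(2*c*m) \<le> 1" using assms by (simp add: field_simps)
  moreover have "1/(2*c*m) \<le> (1/c) / (2*m)" by simp
  moreover have "(1/c) / (2*m) \<le> x / (2*R)"
  proof -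
    have "0 < 1/c" using assms by simp
    then have "0 \<le> x" using assms(3) by linarith
    then show ?thesis using assms by (intro frac_le) auto
  qed
  ultimately show ?thesis by simp
qed

lemma pair_bound:
  fixes A :: "(real^'n) set" and \<mu> :: "real^'n" and pk pl :: "real^'n \<Rightarrow> real"
  assumes A: "A \<in> sets lborel"
  and bk: "0 < \<beta>k" and bl: "0 < \<beta>l"
  and wk: "0 < wk" and wl: "0 < wl"
  and Ik: "1/2 \<le> Ik" "Ik \<le> 1" and Il: "1/2 \<le> Il" "Il \<le> 1"
  and hk: "\<And>z. z \<in> A \<Longrightarrow> pk z = wk * gauss \<beta>k \<mu> z / Ik"
  and hl: "\<And>z. z \<in> A \<Longrightarrow> pl z = wl * gauss \<beta>l \<mu> z / Il"
  and ml: "(LINT z:A|lborel. pl z) = wl" and mk: "(LINT z:A|lborel. pk z) = wk"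
  and c: "1 \<le> c" and wr: "1/c \<le> wl/wk"
  and R: "(max \<beta>k \<beta>l / min \<beta>k \<beta>l) powr (real CARD('n)/2) \<le> sqrt (real CARD('n))"
  shows "1 / (2 * c * sqrt (real CARD('n))) \<le> (1/wk) * (LINT z:A|lborel. min (pk z) (pl z))"
proof -
  let ?m = "sqrt (real CARD('n))"
  have m1: "1 \<le> ?m" by simp
  have gp: "\<And>\<beta> z. 0 < \<beta> \<Longrightarrow> 0 \<le> gauss \<beta> \<mu> z" using gauss_pos by (auto intro: less_imp_le)
  have sik: "set_integrable lborel A pk"
  proof (rule si_cong)
    show "set_integrable lborel A (\<lambda>z. (wk/Ik) * gauss \<beta>k \<mu> z)"
      unfolding set_integrable_def
      using integrable_mult_indicator[OF A integrable_mult_right[OF gauss_integrable[OF bk]]] by simp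
  qed (simp add: hk)
  have sil: "set_integrable lborel A pl"
  proof (rule si_cong)
    show "set_integrable lborel A (\<lambda>z. (wl/Il) * gauss \<beta>l \<mu> z)"
      unfolding set_integrable_def
      using integrable_mult_indicator[OF A integrable_mult_right[OF gauss_integrable[OF bl]]] by simp
  qed (simp add: hl)
  show ?thesis
  proof (cases "\<beta>k < \<beta>l")
    case True
    define R where "R = (\<beta>l/\<beta>k) powr (real CARD('n)/2)"
    have R0: "0 < R" using bk bl by (simp add: R_def)
    have Rm: "R \<le> ?m" using R True unfolding R_def by (simp add: max_def min_def)
    define \<theta> where "\<theta> = (wk/wl) / (2*R)"
    have th0: "0 \<le> \<theta>" using wk wl R0 by (simp add: \<theta>_def)
    have pt: "\<theta> * pl z \<le> pk z" if z: "z \<in> A" for z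
    proof -
      have gle: "gauss \<beta>l \<mu> z \<le> R * gauss \<beta>k \<mu> z" unfolding R_def
        using gauss_cmp[OF bk, of \<beta>l \<mu> z] True by simp
      have g0: "0 \<le> gauss \<beta>l \<mu> z" "0 \<le> gauss \<beta>k \<mu> z" using gp bk bl by auto
      have "\<theta> * pl z = (wk / R) * (gauss \<beta>l \<mu> z / (2 * Il))"
        using hl[OF z] wl R0 by (simp add: \<theta>_def field_simps)
      also have "\<dots> \<le> (wk / R) * gauss \<beta>l \<mu> z"
        using Il g0 wk R0 by (intro mult_left_mono half_aux) auto
      also have "\<dots> \<le> wk * gauss \<beta>k \<mu> z"
        using gle wk R0 by (simp add: field_simps)
      also have "\<dots> \<le> wk * gauss \<beta>k \<mu> z / Ik"
        using Ik g0 wk by (simp add: field_simps mult_left_le_one_le)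
      finally show ?thesis using hk[OF z] by simp
    qed
    have "min 1 \<theta> * (LINT z:A|lborel. pl z) \<le> (LINT z:A|lborel. min (pl z) (pk z))"
      by (rule ov_core[OF sil sik _ pt th0]) (use hl gp bl wl Il in \<open>auto\<close>)
    then have "min 1 \<theta> * wl \<le> (LINT z:A|lborel. min (pk z) (pl z))"
      using ml by (simp add: min.commute)
    then have "min 1 \<theta> * wl / wk \<le> (1/wk) * (LINT z:A|lborel. min (pk z) (pl z))"
      using wk by (simp add: divide_right_mono)
    moreover have "min 1 \<theta> * wl / wk = min (wl/wk) (1/(2*R))"
    proof -
      have "\<theta> * wl / wk = 1/(2*R)" using wk wl R0 by (simp add: \<theta>_def field_simps)
      moreover have "min 1 \<theta> * wl / wk = min (wl/wk) (\<theta> * wl / wk)"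
        using min_scale[of "wl/wk" \<theta>] wk wl by (simp add: mult.assoc)
      ultimately show ?thesis by simp
    qed
    moreover have "1/(2*?m) \<le> 1/(2*R)" using R0 Rm by (intro divide_left_mono) auto
    ultimately have "1/(2*c*?m) \<le> min 1 \<theta> * wl / wk" using final_arith[OF c m1 wr, of "1/(2*R)"] by simp
    then show ?thesis using \<open>min 1 \<theta> * wl / wk \<le> _\<close> by (rule order.trans)
  next
    case False
    define R where "R = (\<beta>k/\<beta>l) powr (real CARD('n)/2)"
    have R0: "0 < R" using bk bl by (simp add: R_def)
    have "max \<beta>k \<beta>l = \<beta>k" "min \<beta>k \<beta>l = \<beta>l" using False by auto
    then have Rm: "R \<le> ?m" using R unfolding R_def by simp
    define \<theta> where "\<theta> = (wl/wk) / (2*R)"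
    have th0: "0 \<le> \<theta>" using wk wl R0 by (simp add: \<theta>_def)
    have pt: "\<theta> * pk z \<le> pl z" if z: "z \<in> A" for z
    proof -
      have gle: "gauss \<beta>k \<mu> z \<le> R * gauss \<beta>l \<mu> z" unfolding R_def
        using gauss_cmp[OF bl, of \<beta>k \<mu> z] False by simp
      have g0: "0 \<le> gauss \<beta>l \<mu> z" "0 \<le> gauss \<beta>k \<mu> z" using gp bk bl by auto
      have "\<theta> * pk z = (wl / R) * (gauss \<beta>k \<mu> z / (2 * Ik))"
        using hk[OF z] wk R0 by (simp add: \<theta>_def field_simps)
      also have "\<dots> \<le> (wl / R) * gauss \<beta>k \<mu> z"
        using Ik g0 wl R0 by (intro mult_left_mono half_aux) auto
      also have "\<dots> \<le> wl * gauss \<beta>l \<mu> z"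
        using gle wl R0 by (simp add: field_simps)
      also have "\<dots> \<le> wl * gauss \<beta>l \<mu> z / Il"
        using Il g0 wl by (simp add: field_simps mult_left_le_one_le)
      finally show ?thesis using hl[OF z] by simp
    qed
    have "min 1 \<theta> * (LINT z:A|lborel. pk z) \<le> (LINT z:A|lborel. min (pk z) (pl z))"
      by (rule ov_core[OF sik sil _ pt th0]) (use hk gp bk wk Ik in \<open>auto\<close>)
    then have "min 1 \<theta> \<le> (1/wk) * (LINT z:A|lborel. min (pk z) (pl z))"
      using mk wk by (simp add: field_simps)
    moreover have "1/(2*c*?m) \<le> min 1 \<theta>"
      unfolding \<theta>_def using final_arith2[OF c m1 wr R0 Rm] .
    ultimately show ?thesis by (rule order.trans[rotated])
  qed
qed


lemma aux_eq: "0<(a::real) \<Longrightarrow> 0<e \<Longrightarrow> 0<S \<Longrightarrow> 0<c \<Longrightarrow> 1/c = (a*e)/(c*e*S)*(S/a)"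
  by (simp add: field_simps)

lemma w_ratio:
  fixes x y c \<beta> \<beta>' :: real and M :: nat
  assumes x: "x > 0" and y: "y > 0" and c: "c \<ge> 1" and M: "M \<ge> 1"
    and xy: "x/y \<le> c^M" and yx: "y/x \<le> c^M" and d: "\<bar>\<beta>' - \<beta>\<bar> \<le> 1/M"
  shows "1/c \<le> (x powr \<beta>' / (x powr \<beta>' + y powr \<beta>')) / (x powr \<beta> / (x powr \<beta> + y powr \<beta>))"
proof -
  define d where "d = \<beta>' - \<beta>"
  have c0: "c > 0" using c by simp
  have l1: "ln x - ln y \<le> M * ln c"
  proof -
    have "ln (x/y) \<le> ln (c^M)" using xy x y c0 by (subst ln_le_cancel_iff) auto
    then show ?thesis using x y c0 by (simp add: ln_div ln_realpow)
  qed
  have l2: "ln y - ln x \<le> M * ln c"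
  proof -
    have "ln (y/x) \<le> ln (c^M)" using yx x y c0 by (subst ln_le_cancel_iff) auto
    then show ?thesis using x y c0 by (simp add: ln_div ln_realpow)
  qed
  have "\<bar>d\<bar> * \<bar>ln y - ln x\<bar> \<le> (1/M) * (M * ln c)"
    using d l1 l2 c by (intro mult_mono) (auto simp: d_def)
  also have "\<dots> = ln c" using M by simp
  finally have "d * (ln y - ln x) \<le> ln c"
    by (metis abs_ge_self abs_mult order.trans)
  then have "d * ln y \<le> ln c + d * ln x" by (simp add: algebra_simps)
  then have key: "y powr d \<le> c * x powr d"
  proof -
    assume h: "d * ln y \<le> ln c + d * ln x"
    have "c * exp (d * ln x) = exp (ln c + d * ln x)" using c0 by (simp add: exp_add)
    then show ?thesis using x y h by (simp add: powr_def mult.commute)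
  qed
  have xb: "x powr \<beta>' = x powr \<beta> * x powr d" "y powr \<beta>' = y powr \<beta> * y powr d"
    by (simp_all add: d_def powr_add[symmetric])
  have pos: "0 < x powr \<beta>" "0 < y powr \<beta>" "0 < x powr d" "0 < y powr d" using x y by auto
  have den: "x powr \<beta>' + y powr \<beta>' \<le> c * x powr d * (x powr \<beta> + y powr \<beta>)"
  proof -
    have "x powr \<beta> * x powr d \<le> x powr \<beta> * (c * x powr d)"
      using pos c by (intro mult_left_mono) auto
    moreover have "y powr \<beta> * y powr d \<le> y powr \<beta> * (c * x powr d)"
      using pos key by (intro mult_left_mono) auto
    ultimately show ?thesis unfolding xb by (simp add: algebra_simps)
  qed
  have "1/c = (x powr \<beta> * x powr d) / (c * x powr d * (x powr \<beta> + y powr \<beta>)) * ((x powr \<beta> + y powr \<beta>) / x powr \<beta>)"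
    using pos c0 by (intro aux_eq add_pos_pos) auto
  also have "\<dots> \<le> (x powr \<beta> * x powr d) / (x powr \<beta>' + y powr \<beta>') * ((x powr \<beta> + y powr \<beta>) / x powr \<beta>)"
  proof (rule mult_right_mono)
    have S: "0 < x powr \<beta> + y powr \<beta>" "0 < x powr \<beta>' + y powr \<beta>'" using x y by (auto intro: add_pos_pos)
    have "0 < c * x powr d * (x powr \<beta> + y powr \<beta>)" by (metis mult_pos_pos S(1) pos(3) c0)
    then show "(x powr \<beta> * x powr d) / (c * x powr d * (x powr \<beta> + y powr \<beta>)) \<le> (x powr \<beta> * x powr d) / (x powr \<beta>' + y powr \<beta>')"
      using S pos den by (intro divide_left_mono) auto
    show "0 \<le> (x powr \<beta> + y powr \<beta>) / x powr \<beta>" using S pos by simp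
  qed
  also have "\<dots> = (x powr \<beta>' / (x powr \<beta>' + y powr \<beta>')) / (x powr \<beta> / (x powr \<beta> + y powr \<beta>))"
    unfolding xb using pos by (simp add: field_simps)
  finally show ?thesis .
qed



definition SS :: "nat \<Rightarrow> real set" where
  "SS M = ((\<lambda>k. real M powr (- (real M - real k) / real M)) ` {0..M}
      \<union> (\<lambda>k. real k / real M) ` {1..M})"

lemma betas_SS: "betas M = sorted_list_of_set (SS M)"
  by (simp add: betas_def SS_def)

lemma SS_finite: "finite (SS M)" by (simp add: SS_def)

lemma SS_ne: "M \<ge> 1 \<Longrightarrow> SS M \<noteq> {}" by (auto simp: SS_def)

lemma SS_bounds:
  assumes "M \<ge> 1" "x \<in> SS M"
  shows "1 / real M \<le> x \<and> x \<le> 1"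
proof -
  have M: "real M \<ge> 1" using assms by simp
  { fix k assume k: "k \<in> {0..M}"
    let ?e = "- (real M - real k) / real M"
    have e1: "-1 \<le> ?e" "?e \<le> 0" using k M by (auto simp: field_simps)
    have "real M powr -1 \<le> real M powr ?e" using e1 M by (intro powr_mono) auto
    moreover have "real M powr ?e \<le> real M powr 0" using e1 M by (intro powr_mono) auto
    ultimately have "1 / real M \<le> real M powr ?e \<and> real M powr ?e \<le> 1" using M
      by (simp add: powr_minus divide_inverse) }
  moreover
  { fix k assume k: "k \<in> {1..M}"
    have "1 / real M \<le> real k / real M \<and> real k / real M \<le> 1" using k M
      by (auto simp: divide_right_mono)  }
  ultimately show ?thesis using assms(2) unfolding SS_def by auto
qed

lemma SS_gap1:
  assumes M: "M \<ge> 1" and x: "x \<in> SS M" "x < 1"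
  shows "\<exists>s\<in>SS M. x < s \<and> s \<le> x + 1 / real M"
proof -
  have M1: "real M \<ge> 1" using M by simp
  have x0: "x > 0"
  proof -
    have "0 < 1 / real M" using M1 by simp
    then show ?thesis using SS_bounds[OF M x(1)] by linarith
  qed
  define j where "j = \<lfloor>x * real M\<rfloor>"
  have j0: "0 \<le> j" using x0 M1 by (simp add: j_def)
  have jM: "j < int M"
  proof -
    have "x * real M < real M" using x M1 by simp
    moreover have "real_of_int j \<le> x * real M" by (simp add: j_def)
    ultimately have "real_of_int j < real_of_int (int M)" by simp
    then show ?thesis by (simp only: of_int_less_iff)
  qed
  define k where "k = nat j + 1"
  have k: "k \<in> {1..M}" using j0 jM by (auto simp: k_def)
  have rk: "real k = real_of_int j + 1" using j0 by (simp add: k_def)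
  have "x * real M < real k" unfolding rk j_def by linarith
  then have "x < real k / real M" using M1 by (simp add: field_simps)
  moreover have "real k \<le> x * real M + 1" unfolding rk j_def by linarith
  then have "real k / real M \<le> x + 1 / real M" using M1 by (simp add: field_simps)
  moreover have "real k / real M \<in> SS M" using k unfolding SS_def by auto
  ultimately show ?thesis by blast
qed

lemma SS_gap2:
  assumes M: "M \<ge> 1" and x: "x \<in> SS M" "x < 1"
  shows "\<exists>s\<in>SS M. x < s \<and> s \<le> x * real M powr (1 / real M)"
proof -
  have M1: "real M \<ge> 1" using M by simp
  have xb: "1 / real M \<le> x" using SS_bounds[OF M x(1)] by simp
  have M2: "real M > 1"
  proof (rule ccontr)
    assume "\<not> real M > 1" then have "real M = 1" using M1 by simp
    then show False using xb x(2) by simp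
  qed
  have x0: "x > 0"
  proof -
    have "0 < 1 / real M" using M1 by simp
    then show ?thesis using xb by linarith
  qed
  define t where "t = log (real M) x"
  have xt: "real M powr t = x" using x0 M2 by (simp add: t_def)
  have t1: "-1 \<le> t"
  proof -
    have "log (real M) (1 / real M) \<le> t" unfolding t_def using xb M2 x0 by (subst log_le_cancel_iff) auto
    then show ?thesis using M2 by (simp add: log_divide)
  qed
  have t0: "t < 0" unfolding t_def using x M2 x0 by (simp add: log_less_zero_cancel_iff)
  define j where "j = \<lfloor>real M * t\<rfloor>"
  have j1: "- int M \<le> j"
  proof -
    have "real M * (-1) \<le> real M * t" using t1 M1 by (intro mult_left_mono) auto
    then have "real_of_int (- int M) \<le> real M * t" by simp
    then show ?thesis unfolding j_def by (simp only: le_floor_iff)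
  qed
  have j2: "j < 0" unfolding j_def using t0 M1 by (simp add: floor_less_iff mult_pos_neg)
  define k where "k = nat (j + int M + 1)"
  have k: "k \<in> {0..M}" using j1 j2 by (auto simp: k_def)
  have rk: "real k = real_of_int j + real M + 1" using j1 by (simp add: k_def)
  have e: "- (real M - real k) / real M = (real_of_int j + 1) / real M" unfolding rk by simp
  let ?s = "real M powr (- (real M - real k) / real M)"
  have sS: "?s \<in> SS M" using k unfolding SS_def by auto
  have "real M * t < real_of_int j + 1" unfolding j_def by linarith
  then have lt: "t < (real_of_int j + 1) / real M" using M1 by (simp add: field_simps)
  have "real_of_int j \<le> real M * t" unfolding j_def by linarith
  then have le: "(real_of_int j + 1) / real M \<le> t + 1 / real M" using M1 by (simp add: field_simps)
  have "x < ?s" unfolding e using powr_less_mono[OF lt M2] xt by simp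
  moreover have "?s \<le> real M powr (t + 1 / real M)" unfolding e using le M2 by (intro powr_mono) auto
  then have "?s \<le> x * real M powr (1 / real M)" using xt by (simp add: powr_add)
  ultimately show ?thesis using sS by blast
qed

lemma sorted_le_nth:
  fixes xs :: "real list"
  assumes "sorted_wrt (<) xs" "i \<le> j" "j < length xs"
  shows "xs ! i \<le> xs ! j"
proof (cases "i = j")
  case False
  then have "i < j" using assms(2) by simp
  then show ?thesis using sorted_wrt_nth_less[OF assms(1) _ assms(3)] by (simp add: less_imp_le)
qed simp

lemma sorted_adj:
  fixes xs :: "real list"
  assumes "sorted_wrt (<) xs" "Suc k < length xs" "s \<in> set xs" "xs ! k < s"
  shows "xs ! Suc k \<le> s"
proof -
  obtain j where j: "j < length xs" "s = xs ! j" using assms(3) by (auto simp: in_set_conv_nth)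
  have "\<not> j \<le> k"
  proof
    assume "j \<le> k"
    then have "xs ! j \<le> xs ! k" using sorted_le_nth[OF assms(1), of j k] assms(2) by simp
    then show False using assms(4) j(2) by simp
  qed
  then have "Suc k \<le> j" by simp
  then show ?thesis using sorted_le_nth[OF assms(1), of "Suc k" j] j by simp
qed

lemma betas_facts:
  assumes M: "M \<ge> 1"
  defines "xs \<equiv> betas M"
  shows "length xs \<ge> 1"
    and "\<And>k. k < length xs \<Longrightarrow> 1 / real M \<le> xs ! k \<and> xs ! k \<le> 1"
    and "\<And>k. Suc k < length xs \<Longrightarrow> xs ! k < xs ! Suc k"
    and "\<And>k. Suc k < length xs \<Longrightarrow> xs ! Suc k - xs ! k \<le> 1 / real M"
    and "\<And>k. Suc k < length xs \<Longrightarrow> xs ! Suc k \<le> xs ! k * real M powr (1 / real M)"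
proof -
  have st: "sorted_wrt (<) xs" and se: "set xs = SS M"
    unfolding xs_def betas_SS by (simp_all add: SS_finite strict_sorted_list_of_set)
  show "length xs \<ge> 1" using SS_ne[OF M] se by (cases xs) auto
  show b: "1 / real M \<le> xs ! k \<and> xs ! k \<le> 1" if "k < length xs" for k
    using SS_bounds[OF M] se that nth_mem by blast
  show lt: "xs ! k < xs ! Suc k" if "Suc k < length xs" for k
    using st that by (simp add: sorted_wrt_nth_less)
  show "xs ! Suc k - xs ! k \<le> 1 / real M" if h: "Suc k < length xs" for k
  proof -
    have xin: "xs ! k \<in> SS M" using h se nth_mem[of k xs] by simp
    have "xs ! k < 1" using lt[OF h] b[OF h] by linarith
    then obtain s where s: "s \<in> SS M" "xs ! k < s" "s \<le> xs ! k + 1 / real M" using SS_gap1[OF M xin] by blast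
    have "xs ! Suc k \<le> s" using sorted_adj[OF st h] s se by blast
    then show ?thesis using s by simp
  qed
  show "xs ! Suc k \<le> xs ! k * real M powr (1 / real M)" if h: "Suc k < length xs" for k
  proof -
    have xin: "xs ! k \<in> SS M" using h se nth_mem[of k xs] by simp
    have "xs ! k < 1" using lt[OF h] b[OF h] by linarith
    then obtain s where s: "s \<in> SS M" "xs ! k < s" "s \<le> xs ! k * real M powr (1 / real M)" using SS_gap2[OF M xin] by blast
    have "xs ! Suc k \<le> s" using sorted_adj[OF st h] s se by blast
    then show ?thesis using s by simp
  qed
qed


lemma frac_cross:
  fixes a b c e :: real
  assumes "0 < b" "0 < e" "a * e \<le> c * b"
  shows "a / b \<le> c / e"
  using assms by (simp add: field_simps)

lemma w_mono:
  fixes x y t t' :: real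
  assumes "0 < y" "y \<le> x" "t \<le> t'"
  shows "x powr t / (x powr t + y powr t) \<le> x powr t' / (x powr t' + y powr t')"
proof -
  have x: "0 < x" using assms by simp
  define d where "d = t' - t"
  have d: "0 \<le> d" using assms by (simp add: d_def)
  have yd: "y powr d \<le> x powr d" using assms d by (intro powr_mono2) auto
  have e: "x powr t' = x powr t * x powr d" "y powr t' = y powr t * y powr d"
    by (simp_all add: d_def powr_add[symmetric])
  have p: "0 < x powr t" "0 < y powr t" "0 < x powr d" "0 < y powr d" using x assms by auto
  have "x powr t * (y powr t * y powr d) \<le> x powr t * (y powr t * x powr d)"
    using p yd by (intro mult_left_mono) auto
  then have "x powr t * (x powr t * x powr d + y powr t * y powr d) \<le> x powr t * x powr d * (x powr t + y powr t)"
    by (simp add: algebra_simps)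
  then show ?thesis unfolding e using p
    by (intro frac_cross add_pos_pos mult_pos_pos) (auto simp: algebra_simps)
qed

lemma prod_tele:
  fixes f :: "nat \<Rightarrow> real"
  assumes "\<And>k. k \<le> n \<Longrightarrow> 0 < f k"
  shows "(\<Prod>k\<in>{1..n}. f (k - 1) / f k) = f 0 / f n"
  using assms
proof (induction n)
  case 0 then show ?case by simp
next
  case (Suc n)
  have "(\<Prod>k\<in>{1..Suc n}. f (k - 1) / f k) = (\<Prod>k\<in>{1..n}. f (k - 1) / f k) * (f n / f (Suc n))"
    by (simp add: prod.nat_ivl_Suc')
  also have "\<dots> = f 0 / f n * (f n / f (Suc n))" using Suc by simp
  also have "\<dots> = f 0 / f (Suc n)" using Suc.prems[of n] by simp
  finally show ?case .
qed

theorem mainTheorem12: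
  fixes b c a :: real
  assumes "b > 0" and "c \<ge> 1"
    and "1/2 \<le> a" and "a < 1"
    and "a / (1 - a) \<le> c ^ CARD('n)"
  defines "\<beta> \<equiv> betas CARD('n)"
  defines "N \<equiv> length (betas CARD('n)) - 1"
  defines "\<A> \<equiv> {A1 :: (real^'n) set, A2}"
  shows "(\<forall>k<N. pi_meas a b (\<beta> ! k) (A1 :: (real^'n) set) \<le> pi_meas a b (\<beta> ! Suc k) A1)
       \<and> (\<forall>A\<in>\<A>. (\<Prod>k\<in>{1..N}. min 1 (pi_meas a b (\<beta> ! (k - 1)) A / pi_meas a b (\<beta> ! k) A)) \<ge> 1/2)
       \<and> (\<forall>k\<le>N. \<forall>l\<le>N. \<forall>A\<in>\<A>. (k = l + 1 \<or> l = k + 1) \<longrightarrow>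
            (1 / pi_meas a b (\<beta> ! k) A) * (LINT z:A|lborel. min (pi_temp a b (\<beta> ! k) z) (pi_temp a b (\<beta> ! l) z))
              \<ge> 1 / (2 * c * sqrt (real CARD('n))))"
  proof -
  let ?M = "CARD('n)"
  have M1: "?M \<ge> 1" by (simp add: Suc_le_eq)
  have a0: "0 < a" "0 < 1 - a" using assms by auto
  have ab: "0 < a" "a < 1" "b > 0" using assms by auto
  note bf = betas_facts[OF M1]
  have lenN: "length \<beta> = Suc N" using bf(1) unfolding N_def \<beta>_def by simp
  have bnd: "\<And>k. k \<le> N \<Longrightarrow> 1 / real ?M \<le> \<beta> ! k \<and> \<beta> ! k \<le> 1"
  proof -
    fix k assume "k \<le> N"
    then have "k < length \<beta>" using lenN by simp
    then show "1 / real ?M \<le> \<beta> ! k \<and> \<beta> ! k \<le> 1" using bf(2) unfolding \<beta>_def by blast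
  qed
  have bpos: "\<And>k. k \<le> N \<Longrightarrow> 0 < \<beta> ! k"
  proof -
    fix k assume "k \<le> N"
    then have "1 / real ?M \<le> \<beta> ! k" using bnd by blast
    moreover have "0 < 1 / real ?M" using M1 by simp
    ultimately show "0 < \<beta> ! k" by linarith
  qed
  have adj: "\<beta> ! i < \<beta> ! Suc i \<and> \<beta> ! Suc i - \<beta> ! i \<le> 1 / real ?M
        \<and> (\<beta> ! Suc i / \<beta> ! i) powr (real ?M / 2) \<le> sqrt (real ?M)" if i: "Suc i \<le> N" for i
  proof -
    have h: "Suc i < length \<beta>" using i lenN by simp
    have lt: "\<beta> ! i < \<beta> ! Suc i" using bf(3) h unfolding \<beta>_def by blast
    have d: "\<beta> ! Suc i - \<beta> ! i \<le> 1 / real ?M" using bf(4) h unfolding \<beta>_def by blast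
    have r: "\<beta> ! Suc i \<le> \<beta> ! i * real ?M powr (1 / real ?M)" using bf(5) h unfolding \<beta>_def by blast
    have p: "0 < \<beta> ! i" using bpos i by simp
    have "\<beta> ! Suc i / \<beta> ! i \<le> real ?M powr (1 / real ?M)" using r p by (simp add: divide_le_eq mult.commute)
    then have "(\<beta> ! Suc i / \<beta> ! i) powr (real ?M / 2) \<le> (real ?M powr (1 / real ?M)) powr (real ?M / 2)"
      using p lt by (intro powr_mono2) auto
    also have "\<dots> = sqrt (real ?M)" using M1 by (simp add: powr_powr powr_half_sqrt)
    finally show ?thesis using lt d by simp
  qed
  define w1 where "w1 t = a powr t / (a powr t + (1-a) powr t)" for t
  define w2 where "w2 t = (1-a) powr t / ((1-a) powr t + a powr t)" for t
  have pm1: "pi_meas a b (\<beta> ! k) (A1 :: (real^'n) set) = w1 (\<beta> ! k)" if "k \<le> N" for k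
    using pm_A1[OF bpos[OF that] ab, where 'n='n] by (simp add: w1_def)
  have pm2: "pi_meas a b (\<beta> ! k) (A2 :: (real^'n) set) = w2 (\<beta> ! k)" if "k \<le> N" for k
    using pm_A2[OF bpos[OF that] ab, where 'n='n] by (simp add: w2_def add.commute)
  have w12: "w2 t = 1 - w1 t" for t
  proof -
    have "0 < a powr t + (1-a) powr t" using a0 by (intro add_pos_pos) auto
    then show ?thesis by (simp add: w1_def w2_def field_simps)
  qed
  have w1pos: "0 < w1 t" for t using a0 by (simp add: w1_def add_pos_pos)
  have w2pos: "0 < w2 t" for t using a0 by (simp add: w2_def add_pos_pos)
  have w1le: "w1 t \<le> 1" for t using w12[of t] w2pos[of t] by simp
  have w1half: "1/2 \<le> w1 t" if t: "0 \<le> t" for t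
  proof -
    have "(1-a) powr t \<le> a powr t" using assms t by (intro powr_mono2) auto
    moreover have "0 < a powr t + (1-a) powr t" using a0 by (intro add_pos_pos) auto
    ultimately show ?thesis by (simp add: w1_def le_divide_eq)
  qed
  have w1mono: "w1 t \<le> w1 t'" if "t \<le> t'" for t t'
    unfolding w1_def using w_mono[of "1-a" a t t'] assms that by simp
  have mono: "\<beta> ! k \<le> \<beta> ! Suc k" if "k < N" for k
    using adj[of k] that by simp
  have part1: "\<forall>k<N. pi_meas a b (\<beta> ! k) (A1 :: (real^'n) set) \<le> pi_meas a b (\<beta> ! Suc k) A1"
  proof (intro allI impI)
    fix k assume k: "k < N"
    then have e1: "pi_meas a b (\<beta> ! k) (A1 :: (real^'n) set) = w1 (\<beta> ! k)" using pm1 by auto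
    have b2: "0 < \<beta> ! Suc k" using bpos k by simp
    show "pi_meas a b (\<beta> ! k) (A1 :: (real^'n) set) \<le> pi_meas a b (\<beta> ! Suc k) A1"
      using w1mono[OF mono[OF k]] e1 by (simp add: w1_def pm_A1[OF b2 ab])
  qed
  have part2: "\<forall>A\<in>\<A>. (\<Prod>k\<in>{1..N}. min 1 (pi_meas a b (\<beta> ! (k - 1)) A / pi_meas a b (\<beta> ! k) A)) \<ge> 1/2"
  proof
    fix A assume "A \<in> \<A>"
    then consider "A = A1" | "A = A2" unfolding \<A>_def by blast
    then show "(\<Prod>k\<in>{1..N}. min 1 (pi_meas a b (\<beta> ! (k - 1)) A / pi_meas a b (\<beta> ! k) A)) \<ge> 1/2"
    proof cases
      case 1
      have "(\<Prod>k\<in>{1..N}. min 1 (pi_meas a b (\<beta> ! (k - 1)) A / pi_meas a b (\<beta> ! k) A))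
          = (\<Prod>k\<in>{1..N}. w1 (\<beta> ! (k - 1)) / w1 (\<beta> ! k))"
      proof (rule prod.cong)
        fix k assume k: "k \<in> {1..N}"
        have "\<beta> ! (k - 1) \<le> \<beta> ! k"
        proof -
          have "k - 1 < N" using k by auto
          then have "\<beta> ! (k - 1) \<le> \<beta> ! Suc (k - 1)" by (rule mono)
          then show "\<beta> ! (k - 1) \<le> \<beta> ! k" using k by simp
        qed
        then have "w1 (\<beta> ! (k - 1)) \<le> w1 (\<beta> ! k)" by (rule w1mono)
        then show "min 1 (pi_meas a b (\<beta> ! (k - 1)) A / pi_meas a b (\<beta> ! k) A) = w1 (\<beta> ! (k - 1)) / w1 (\<beta> ! k)"
        proof -
          have kk: "k - 1 \<le> N" "k \<le> N" using k by auto
          show ?thesis using 1 pm1[OF kk(1)] pm1[OF kk(2)] w1pos[of "\<beta> ! k"] \<open>w1 (\<beta> ! (k - 1)) \<le> w1 (\<beta> ! k)\<close> by simp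
        qed
      qed simp
      also have "\<dots> = w1 (\<beta> ! 0) / w1 (\<beta> ! N)"
        by (rule prod_tele) (simp add: w1pos)
      also have "\<dots> \<ge> 1/2"
      proof -
        have "1/2 \<le> w1 (\<beta> ! 0) / 1" using w1half[of "\<beta> ! 0"] bpos[of 0] by simp
        also have "\<dots> \<le> w1 (\<beta> ! 0) / w1 (\<beta> ! N)"
          using w1pos w1le by (intro divide_left_mono) (auto intro: less_imp_le)
        finally show ?thesis .
      qed
      finally show ?thesis .
    next
      case 2
      have "(\<Prod>k\<in>{1..N}. min 1 (pi_meas a b (\<beta> ! (k - 1)) A / pi_meas a b (\<beta> ! k) A)) = (\<Prod>k\<in>{1..N}. 1)"
      proof (rule prod.cong)
        fix k assume k: "k \<in> {1..N}"
        have "\<beta> ! (k - 1) \<le> \<beta> ! k"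
        proof -
          have "k - 1 < N" using k by auto
          then have "\<beta> ! (k - 1) \<le> \<beta> ! Suc (k - 1)" by (rule mono)
          then show "\<beta> ! (k - 1) \<le> \<beta> ! k" using k by simp
        qed
        then have "w1 (\<beta> ! (k - 1)) \<le> w1 (\<beta> ! k)" by (rule w1mono)
        then have "w2 (\<beta> ! k) \<le> w2 (\<beta> ! (k - 1))" by (simp add: w12)
        then show "min 1 (pi_meas a b (\<beta> ! (k - 1)) A / pi_meas a b (\<beta> ! k) A) = 1"
        proof -
          have kk: "k - 1 \<le> N" "k \<le> N" using k by auto
          show ?thesis using 2 pm2[OF kk(1)] pm2[OF kk(2)] w2pos[of "\<beta> ! k"] \<open>w2 (\<beta> ! k) \<le> w2 (\<beta> ! (k - 1))\<close> by simp
        qed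
      qed simp
      then show ?thesis by simp
    qed
  qed
  have part3: "\<forall>k\<le>N. \<forall>l\<le>N. \<forall>A\<in>\<A>. (k = l + 1 \<or> l = k + 1) \<longrightarrow>
            (1 / pi_meas a b (\<beta> ! k) A) * (LINT z:A|lborel. min (pi_temp a b (\<beta> ! k) z) (pi_temp a b (\<beta> ! l) z))
              \<ge> 1 / (2 * c * sqrt (real CARD('n)))"
  proof (intro allI impI ballI)
    fix k l A assume k: "k \<le> N" and l: "l \<le> N" and A: "A \<in> \<A>" and kl: "k = l + 1 \<or> l = k + 1"
    have bk: "0 < \<beta> ! k" and bl: "0 < \<beta> ! l" using bpos k l by auto
    have d: "\<bar>\<beta> ! l - \<beta> ! k\<bar> \<le> 1 / real ?M"
      and R: "(max (\<beta> ! k) (\<beta> ! l) / min (\<beta> ! k) (\<beta> ! l)) powr (real ?M / 2) \<le> sqrt (real ?M)"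
    proof -
      from kl have "(\<beta> ! l - \<beta> ! k \<le> 1 / real ?M \<and> \<beta> ! k < \<beta> ! l \<and> (\<beta> ! l / \<beta> ! k) powr (real ?M / 2) \<le> sqrt (real ?M))
          \<or> (\<beta> ! k - \<beta> ! l \<le> 1 / real ?M \<and> \<beta> ! l < \<beta> ! k \<and> (\<beta> ! k / \<beta> ! l) powr (real ?M / 2) \<le> sqrt (real ?M))"
      proof
        assume "k = l + 1" then show ?thesis using adj[of l] k by simp
      next
        assume "l = k + 1" then show ?thesis using adj[of k] l by simp
      qed
      then show "\<bar>\<beta> ! l - \<beta> ! k\<bar> \<le> 1 / real ?M"
        and "(max (\<beta> ! k) (\<beta> ! l) / min (\<beta> ! k) (\<beta> ! l)) powr (real ?M / 2) \<le> sqrt (real ?M)"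
        by (auto simp: max_def min_def)
    qed
    have cM1: "(1-a)/a \<le> c ^ ?M"
    proof -
      have "(1-a)/a \<le> 1" using assms by simp
      also have "1 \<le> c ^ ?M" using assms by simp
      finally show ?thesis .
    qed
    from A consider "A = A1" | "A = A2" unfolding \<A>_def by blast
    then show "(1 / pi_meas a b (\<beta> ! k) A) * (LINT z:A|lborel. min (pi_temp a b (\<beta> ! k) z) (pi_temp a b (\<beta> ! l) z))
              \<ge> 1 / (2 * c * sqrt (real CARD('n)))"
    proof cases
      case 1
      have wr: "1/c \<le> w1 (\<beta> ! l) / w1 (\<beta> ! k)"
        unfolding w1_def using w_ratio[OF a0(1) a0(2) assms(2) M1 _ cM1 d] assms by simp
      have hk: "pi_temp a b (\<beta> ! k) z = w1 (\<beta> ! k) * gauss (\<beta> ! k) (\<chi> i. - b) z / II TYPE('n) b (\<beta> ! k)" if "z \<in> A1" for z :: "real^'n"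
        using pt_A1[OF bk ab that] by (simp add: w1_def)
      have hl: "pi_temp a b (\<beta> ! l) z = w1 (\<beta> ! l) * gauss (\<beta> ! l) (\<chi> i. - b) z / II TYPE('n) b (\<beta> ! l)" if "z \<in> A1" for z :: "real^'n"
        using pt_A1[OF bl ab that] by (simp add: w1_def)
      have ml: "(LINT z:(A1 :: (real^'n) set)|lborel. pi_temp a b (\<beta> ! l) z) = w1 (\<beta> ! l)"
        using pm1[OF l] by (simp add: pi_meas_def)
      have mk: "(LINT z:(A1 :: (real^'n) set)|lborel. pi_temp a b (\<beta> ! k) z) = w1 (\<beta> ! k)"
        using pm1[OF k] by (simp add: pi_meas_def)
      have Ik: "1/2 \<le> II TYPE('n) b (\<beta> ! k)" "II TYPE('n) b (\<beta> ! k) \<le> 1"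
        using II_bounds[OF bk ab(3)] by auto
      have Il: "1/2 \<le> II TYPE('n) b (\<beta> ! l)" "II TYPE('n) b (\<beta> ! l) \<le> 1"
        using II_bounds[OF bl ab(3)] by auto
      show ?thesis unfolding 1 pm1[OF k]
        by (rule pair_bound[OF A1_meas bk bl w1pos w1pos Ik Il hk hl ml mk assms(2) wr R])
    next
      case 2
      have wr: "1/c \<le> w2 (\<beta> ! l) / w2 (\<beta> ! k)"
        unfolding w2_def using w_ratio[OF a0(2) a0(1) assms(2) M1 cM1 _ d] assms by simp
      have hk: "pi_temp a b (\<beta> ! k) z = w2 (\<beta> ! k) * gauss (\<beta> ! k) (\<chi> i. b) z / II TYPE('n) b (\<beta> ! k)" if "z \<in> A2" for z :: "real^'n"
        using pt_A2[OF bk ab that] by (simp add: w2_def add.commute)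
      have hl: "pi_temp a b (\<beta> ! l) z = w2 (\<beta> ! l) * gauss (\<beta> ! l) (\<chi> i. b) z / II TYPE('n) b (\<beta> ! l)" if "z \<in> A2" for z :: "real^'n"
        using pt_A2[OF bl ab that] by (simp add: w2_def add.commute)
      have ml: "(LINT z:(A2 :: (real^'n) set)|lborel. pi_temp a b (\<beta> ! l) z) = w2 (\<beta> ! l)"
        using pm2[OF l] by (simp add: pi_meas_def)
      have mk: "(LINT z:(A2 :: (real^'n) set)|lborel. pi_temp a b (\<beta> ! k) z) = w2 (\<beta> ! k)"
        using pm2[OF k] by (simp add: pi_meas_def)
      have Ik: "1/2 \<le> II TYPE('n) b (\<beta> ! k)" "II TYPE('n) b (\<beta> ! k) \<le> 1"
        using II_bounds[OF bk ab(3)] by auto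
      have Il: "1/2 \<le> II TYPE('n) b (\<beta> ! l)" "II TYPE('n) b (\<beta> ! l) \<le> 1"
        using II_bounds[OF bl ab(3)] by auto
      show ?thesis unfolding 2 pm2[OF k]
        by (rule pair_bound[OF A2_meas bk bl w2pos w2pos Ik Il hk hl ml mk assms(2) wr R])
    qed
  qed
  show ?thesis using part1 part2 part3 by blast
qed

end
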